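(* Let $a,b\in C\ell_2\setminus\mathbb{R}$ with $a_0=b_0$ and $G(a)=G(b)$, and let $F=L(a)-R(b)$. Then the Moore–Penrose inverse of the real matrix $F$ is $$F^+=\frac{L(a')-R(b')}{2(|Cim(a)|^2+|Cim(b)|^2)}.$$
   Context: $C\ell_2$ is the 4-dimensional real associative algebra with basis $1,e_1,e_2,e_3$ and multiplication $e_1^2=e_2^2=1$, $e_3^2=-1$, $e_1e_2=e_3=-e_2e_1$, $e_1e_3=e_2=-e_3e_1$, $e_3e_2=e_1=-e_2e_3$; $\mathbb{R}$ is identified with $\mathbb{R}\cdot 1$. Write $a=a_0+a_1e_1+a_2e_2+a_3e_3$, $b=b_0+b_1e_1+b_2e_2+b_3e_3$. Notation: $a'=a_0+a_1e_1+a_2e_2-a_3e_3$, $G(a)=a_1^2+a_2^2-a_3^2$, $|Cim(a)|^2=a_1^2+a_2^2+a_3^2$, $$L(a)=\begin{pmatrix} a_0&a_1&a_2&-a_3\\ a_1&a_0&a_3&-a_2\\ a_2&-a_3&a_0&a_1\\ a_3&-a_2&a_1&a_0\end{pmatrix},\qquad R(a)=\begin{pmatrix} a_0&a_1&a_2&-a_3\\ a_1&a_0&-a_3&a_2\\ a_2&a_3&a_0&-a_1\\ a_3&a_2&-a_1&a_0\end{pmatrix}.$$ The Moore–Penrose inverse $F^+$ of a real matrix $F$ is the unique $X$ with $FXF=F$, $XFX=X$, $(FX)^T=FX$, $(XF)^T=XF$. *)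

theory Defs
  imports "HOL-Analysis.Analysis"
begin

text \<open>Elements a = a0 + a1 e1 + a2 e2 + a3 e3 of the Clifford algebra Cl_2, given by
  their four real coordinates.\<close>
datatype cl2 = Cl (c0: real) (c1: real) (c2: real) (c3: real)

definition cl2_of_real :: "real \<Rightarrow> cl2" where
  "cl2_of_real r = Cl r 0 0 0"

definition cl2_reals :: "cl2 set" where
  "cl2_reals = range cl2_of_real"

definition cl2_conj' :: "cl2 \<Rightarrow> cl2" where
  "cl2_conj' a = Cl (c0 a) (c1 a) (c2 a) (- c3 a)"

definition G :: "cl2 \<Rightarrow> real" where
  "G a = (c1 a)^2 + (c2 a)^2 - (c3 a)^2"

definition Cim_norm2 :: "cl2 \<Rightarrow> real" where
  "Cim_norm2 a = (c1 a)^2 + (c2 a)^2 + (c3 a)^2"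

text \<open>4x4 real matrices; row i is (vector [...]) with entries indexed 1..4
  (the index type 4 has elements 1,2,3,4=0).\<close>
definition Lmat :: "cl2 \<Rightarrow> real^4^4" where
  "Lmat a = vector [
     vector [c0 a, c1 a, c2 a, - c3 a],
     vector [c1 a, c0 a, c3 a, - c2 a],
     vector [c2 a, - c3 a, c0 a, c1 a],
     vector [c3 a, - c2 a, c1 a, c0 a]]"

definition Rmat :: "cl2 \<Rightarrow> real^4^4" where
  "Rmat a = vector [
     vector [c0 a, c1 a, c2 a, - c3 a],
     vector [c1 a, c0 a, - c3 a, c2 a],
     vector [c2 a, c3 a, c0 a, - c1 a],
     vector [c3 a, c2 a, - c1 a, c0 a]]"

definition is_mp_inverse :: "real^'n^'m \<Rightarrow> real^'m^'n \<Rightarrow> bool" where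
  "is_mp_inverse F X \<longleftrightarrow>
     F ** X ** F = F \<and> X ** F ** X = X \<and>
     transpose (F ** X) = F ** X \<and> transpose (X ** F) = X ** F"

definition mp_inverse :: "real^'n^'m \<Rightarrow> real^'m^'n" where
  "mp_inverse F = (THE X. is_mp_inverse F X)"

end

theory Submission imports Defs begin
lemma vector_4 [simp]:
 "(vector [x,y,z,w] ::('a::zero)^4)$1 = x"
 "(vector [x,y,z,w] ::('a::zero)^4)$2 = y"
 "(vector [x,y,z,w] ::('a::zero)^4)$3 = z"
 "(vector [x,y,z,w] ::('a::zero)^4)$4 = w"
  unfolding vector_def by simp_all

definition FF where "FF x1 x2 x3 x4 y2 y3 y4 = (Lmat (Cl x1 x2 x3 x4) - Rmat (Cl x1 y2 y3 y4))"
definition MM where "MM x1 x2 x3 x4 y2 y3 y4 = (Lmat (cl2_conj' (Cl x1 x2 x3 x4)) - Rmat (cl2_conj' (Cl x1 y2 y3 y4)))"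

lemma t1:
  fixes x1 x2 x3 x4 y2 y3 y4 :: real
  assumes g: "x2^2 + x3^2 - x4^2 = y2^2 + y3^2 - y4^2"
  shows "FF x1 x2 x3 x4 y2 y3 y4 ** MM x1 x2 x3 x4 y2 y3 y4 ** FF x1 x2 x3 x4 y2 y3 y4 = 
  (2 * (x2^2+x3^2+x4^2 + (y2^2+y3^2+y4^2))) *\<^sub>R FF x1 x2 x3 x4 y2 y3 y4"
  unfolding FF_def MM_def vec_eq_iff forall_4 matrix_matrix_mult_def sum_4 Lmat_def Rmat_def cl2_conj'_def
  apply (simp)
  apply (intro conjI)
  apply (algebra | (simp add: algebra_simps; fail) | (insert g, algebra))+
  done
lemma t2:
  fixes x1 x2 x3 x4 y2 y3 y4 :: real
  assumes g: "x2^2 + x3^2 - x4^2 = y2^2 + y3^2 - y4^2"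
  shows "MM x1 x2 x3 x4 y2 y3 y4 ** FF x1 x2 x3 x4 y2 y3 y4 ** MM x1 x2 x3 x4 y2 y3 y4 = 
  (2 * (x2^2+x3^2+x4^2 + (y2^2+y3^2+y4^2))) *\<^sub>R MM x1 x2 x3 x4 y2 y3 y4"
  unfolding FF_def MM_def vec_eq_iff forall_4 matrix_matrix_mult_def sum_4 Lmat_def Rmat_def cl2_conj'_def
  apply (simp)
  apply (intro conjI)
  apply (algebra | (simp add: algebra_simps; fail) | (insert g, algebra))+
  done
lemma t3:
  fixes x1 x2 x3 x4 y2 y3 y4 :: real
  assumes g: "x2^2 + x3^2 - x4^2 = y2^2 + y3^2 - y4^2"
  shows "transpose (FF x1 x2 x3 x4 y2 y3 y4 ** MM x1 x2 x3 x4 y2 y3 y4) = FF x1 x2 x3 x4 y2 y3 y4 ** MM x1 x2 x3 x4 y2 y3 y4"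
  unfolding FF_def MM_def vec_eq_iff forall_4 matrix_matrix_mult_def sum_4 Lmat_def Rmat_def cl2_conj'_def transpose_def
  apply (simp)
  done
lemma t4:
  fixes x1 x2 x3 x4 y2 y3 y4 :: real
  assumes g: "x2^2 + x3^2 - x4^2 = y2^2 + y3^2 - y4^2"
  shows "transpose (MM x1 x2 x3 x4 y2 y3 y4 ** FF x1 x2 x3 x4 y2 y3 y4) = MM x1 x2 x3 x4 y2 y3 y4 ** FF x1 x2 x3 x4 y2 y3 y4"
  unfolding FF_def MM_def vec_eq_iff forall_4 matrix_matrix_mult_def sum_4 Lmat_def Rmat_def cl2_conj'_def transpose_def
  apply (simp)
  done

lemma mp_unique:
  fixes F :: "real^'n^'m"
  assumes hX: "is_mp_inverse F X" and hY: "is_mp_inverse F Y"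
  shows "X = Y"
proof -
  from hX have X1: "F ** X ** F = F" and X2: "X ** F ** X = X"
    and X3: "transpose (F ** X) = F ** X" and X4: "transpose (X ** F) = X ** F"
    unfolding is_mp_inverse_def by auto
  from hY have Y1: "F ** Y ** F = F" and Y2: "Y ** F ** Y = Y"
    and Y3: "transpose (F ** Y) = F ** Y" and Y4: "transpose (Y ** F) = Y ** F"
    unfolding is_mp_inverse_def by auto
  have tF1: "transpose F = transpose F ** (F ** Y)"
  proof -
    have "transpose F = transpose ((F ** Y) ** F)" using Y1 by simp
    also have "\<dots> = transpose F ** transpose (F ** Y)" by (rule matrix_transpose_mul)
    finally show ?thesis using Y3 by simp
  qed
  have tF2: "transpose F = (X ** F) ** transpose F"
  proof -
    have "transpose F = transpose (F ** (X ** F))" using X1 by (simp add: matrix_mul_assoc)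
    also have "\<dots> = transpose (X ** F) ** transpose F" by (rule matrix_transpose_mul)
    finally show ?thesis using X4 by simp
  qed
  have "X = X ** (F ** X)" using X2 by (simp add: matrix_mul_assoc)
  also have "\<dots> = X ** (transpose X ** transpose F)" using X3 matrix_transpose_mul[of F X] by simp
  also have "\<dots> = X ** (transpose X ** (transpose F ** (F ** Y)))" using tF1 by simp
  also have "\<dots> = X ** ((transpose X ** transpose F) ** (F ** Y))" by (simp add: matrix_mul_assoc)
  also have "\<dots> = X ** ((F ** X) ** (F ** Y))" using X3 matrix_transpose_mul[of F X] by simp
  also have "\<dots> = (X ** F ** X) ** F ** Y" by (simp add: matrix_mul_assoc)
  also have "\<dots> = X ** F ** Y" using X2 by simp
  finally have eX: "X = X ** F ** Y" .
  have "Y = (Y ** F) ** Y" using Y2 by simp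
  also have "\<dots> = (transpose F ** transpose Y) ** Y" using Y4 matrix_transpose_mul[of Y F] by simp
  also have "\<dots> = (((X ** F) ** transpose F) ** transpose Y) ** Y" using tF2 by simp
  also have "\<dots> = (X ** F) ** ((transpose F ** transpose Y) ** Y)" by (simp add: matrix_mul_assoc)
  also have "\<dots> = (X ** F) ** ((Y ** F) ** Y)" using Y4 matrix_transpose_mul[of Y F] by simp
  also have "\<dots> = X ** F ** Y" using Y2 by simp
  finally have eY: "Y = X ** F ** Y" .
  show ?thesis using eX eY by simp
qed

lemma scaleR_mmul_left: "((k::real) *\<^sub>R A) ** B = k *\<^sub>R (A ** (B::real^'c^'b))"
  by (simp add: vec_eq_iff matrix_matrix_mult_def sum_distrib_left mult.assoc)
lemma scaleR_mmul_right: "(A::real^'b^'a) ** ((k::real) *\<^sub>R B) = k *\<^sub>R (A ** (B::real^'c^'b))"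
  by (simp add: vec_eq_iff matrix_matrix_mult_def sum_distrib_left ac_simps)

theorem lemma5p2:
  fixes a b :: cl2
  assumes "a \<notin> cl2_reals" and "b \<notin> cl2_reals"
    and "c0 a = c0 b" and "G a = G b"
  shows "mp_inverse (Lmat a - Rmat b) =
    (1 / (2 * (Cim_norm2 a + Cim_norm2 b))) *\<^sub>R (Lmat (cl2_conj' a) - Rmat (cl2_conj' b))"
proof -
  obtain x1 x2 x3 x4 where a: "a = Cl x1 x2 x3 x4" by (cases a)
  obtain y1 y2 y3 y4 where b: "b = Cl y1 y2 y3 y4" by (cases b)
  have y1: "y1 = x1" using assms(3) a b by simp
  have g: "x2^2 + x3^2 - x4^2 = y2^2 + y3^2 - y4^2" using assms(4) a b by (simp add: G_def)
  define S where "S = 2 * (x2^2+x3^2+x4^2 + (y2^2+y3^2+y4^2))"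
  have nz: "\<not> (x2 = 0 \<and> x3 = 0 \<and> x4 = 0)"
    using assms(1) a by (auto simp: cl2_reals_def cl2_of_real_def)
  have Spos: "S > 0"
  proof -
    have "x2^2+x3^2+x4^2 > 0" using nz
      by (metis add_nonneg_nonneg add_pos_nonneg add_nonneg_pos zero_less_power2 zero_le_power2)
    moreover have "y2^2+y3^2+y4^2 \<ge> 0" by simp
    ultimately have "0 < x2^2+x3^2+x4^2 + (y2^2+y3^2+y4^2)" by (rule add_pos_nonneg)
    then show ?thesis unfolding S_def by simp
  qed
  have SS: "2 * (Cim_norm2 a + Cim_norm2 b) = S" unfolding S_def a b Cim_norm2_def by simp
  have Fe: "Lmat a - Rmat b = FF x1 x2 x3 x4 y2 y3 y4" unfolding FF_def a b y1 ..
  have Me: "Lmat (cl2_conj' a) - Rmat (cl2_conj' b) = MM x1 x2 x3 x4 y2 y3 y4" unfolding MM_def a b y1 ..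
  define F where "F = FF x1 x2 x3 x4 y2 y3 y4"
  define M where "M = MM x1 x2 x3 x4 y2 y3 y4"
  have e1: "F ** M ** F = S *\<^sub>R F" unfolding F_def M_def S_def by (rule t1[OF g])
  have e2: "M ** F ** M = S *\<^sub>R M" unfolding F_def M_def S_def by (rule t2[OF g])
  have e3: "transpose (F ** M) = F ** M" unfolding F_def M_def by (rule t3[OF g])
  have e4: "transpose (M ** F) = M ** F" unfolding F_def M_def by (rule t4[OF g])
  have inv: "(1/S) * S = 1" using Spos by simp
  have mpi: "is_mp_inverse F ((1/S) *\<^sub>R M)"
    unfolding is_mp_inverse_def
    using e1 e2 e3 e4 inv
    by (simp add: scaleR_mmul_left scaleR_mmul_right transpose_scalar)
  have "mp_inverse F = (1/S) *\<^sub>R M"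
    unfolding mp_inverse_def
  proof (rule the_equality)
    show "is_mp_inverse F ((1/S) *\<^sub>R M)" by (rule mpi)
  next
    fix X assume "is_mp_inverse F X"
    then show "X = (1/S) *\<^sub>R M" by (rule mp_unique[OF _ mpi])
  qed
  then show ?thesis using Fe Me SS F_def M_def by simp
qed

end
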